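(* For $n\ge1$, $\left|\Pi_n\wr C_2(1^11^2,1^12^2,1^21^1)\right|=\sum_{i=0}^nB(i)B(n-i)$, where $B(m)$ is the $m$th Bell number.
   Context: For $n\ge0$ let $[n]=\{1,\dots,n\}$. A $2$-colored set partition of $[n]$ is a set partition of $[n]$ together with an assignment of a color from $\{1,2\}$ to each element; $\Pi_n\wr C_2$ is the set of these. For a set $S$ of patterns, $\Pi_n\wr C_2(S)$ is the set of such colored partitions avoiding every pattern in $S$ in the pattern sense. For the patterns used here: $\sigma$ contains $1^11^2$ iff there are $i<j$ in the same block with $i$ colored $1$ and $j$ colored $2$; $1^21^1$ iff there are $i<j$ in the same block with $i$ colored $2$ and $j$ colored $1$; $1^12^2$ iff there are $i<j$ in different blocks with $i$ colored $1$ and $j$ colored $2$. $B(m)$ is the number of set partitions of $[m]$, with $B(0)=1$. *)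

theory Defs
  imports Main "HOL-Library.Disjoint_Sets" "HOL-Library.FuncSet"
begin

definition Bell :: "nat \<Rightarrow> nat" where
  "Bell m = card {P. partition_on {1..m} P}"

definition colored_partitions :: "nat \<Rightarrow> (nat set set \<times> (nat \<Rightarrow> nat)) set" where
  "colored_partitions n = {(P, c). partition_on {1..n} P \<and> c \<in> {1..n} \<rightarrow>\<^sub>E {1, 2}}"

definition same_block :: "nat set set \<Rightarrow> nat \<Rightarrow> nat \<Rightarrow> bool" where
  "same_block P i j \<longleftrightarrow> (\<exists>B\<in>P. i \<in> B \<and> j \<in> B)"

definition contains_11_12 :: "nat \<Rightarrow> nat set set \<times> (nat \<Rightarrow> nat) \<Rightarrow> bool" where
  "contains_11_12 n \<sigma> \<longleftrightarrow> (\<exists>i\<in>{1..n}. \<exists>j\<in>{1..n}. i < j \<and> same_block (fst \<sigma>) i j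
      \<and> snd \<sigma> i = 1 \<and> snd \<sigma> j = 2)"

definition contains_12_11 :: "nat \<Rightarrow> nat set set \<times> (nat \<Rightarrow> nat) \<Rightarrow> bool" where
  "contains_12_11 n \<sigma> \<longleftrightarrow> (\<exists>i\<in>{1..n}. \<exists>j\<in>{1..n}. i < j \<and> same_block (fst \<sigma>) i j
      \<and> snd \<sigma> i = 2 \<and> snd \<sigma> j = 1)"

definition contains_11_22 :: "nat \<Rightarrow> nat set set \<times> (nat \<Rightarrow> nat) \<Rightarrow> bool" where
  "contains_11_22 n \<sigma> \<longleftrightarrow> (\<exists>i\<in>{1..n}. \<exists>j\<in>{1..n}. i < j \<and> \<not> same_block (fst \<sigma>) i j
      \<and> snd \<sigma> i = 1 \<and> snd \<sigma> j = 2)"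

end

theory Submission imports Defs begin

lemma part_img:
  assumes "partition_on A P" "inj_on f A"
  shows "partition_on (f ` A) ((`) f ` P)"
proof -
  have "(`) f ` P - {{}} = (`) f ` P" using assms(1) by (auto simp: partition_on_def)
  with partition_on_inj_image[OF assms] show ?thesis by simp
qed

lemma card_part_bij:
  assumes "bij_betw f A B"
  shows "card {P. partition_on A P} = card {P. partition_on B P}"
proof -
  define g where "g = the_inv_into A f"
  have bg: "bij_betw g B A" using assms unfolding g_def by (rule bij_betw_the_inv_into)
  have fa: "\<And>x. x \<in> A \<Longrightarrow> g (f x) = x" using assms unfolding g_def bij_betw_def
    by (simp add: the_inv_into_f_f)
  have gb: "\<And>x. x \<in> B \<Longrightarrow> f (g x) = x" using assms unfolding g_def bij_betw_def
    by (simp add: f_the_inv_into_f)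
  show ?thesis
  proof (rule bij_betw_same_card[of "\<lambda>P. (`) f ` P"], rule bij_betw_byWitness[where f'="\<lambda>P. (`) g ` P"])
    show "\<forall>a\<in>{P. partition_on A P}. (`) g ` (`) f ` a = a"
    proof
      fix P assume "P \<in> {P. partition_on A P}"
      then have "\<And>X. X \<in> P \<Longrightarrow> X \<subseteq> A" by (auto simp: partition_on_def)
      then have "\<And>X. X \<in> P \<Longrightarrow> g ` f ` X = X" using fa by (force simp: image_image)
      then show "(`) g ` (`) f ` P = P" by (simp add: image_image cong: image_cong)
    qed
    show "\<forall>a\<in>{P. partition_on B P}. (`) f ` (`) g ` a = a"
    proof
      fix P assume "P \<in> {P. partition_on B P}"
      then have "\<And>X. X \<in> P \<Longrightarrow> X \<subseteq> B" by (auto simp: partition_on_def)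
      then have "\<And>X. X \<in> P \<Longrightarrow> f ` g ` X = X" using gb by (force simp: image_image)
      then show "(`) f ` (`) g ` P = P" by (simp add: image_image cong: image_cong)
    qed
    show "(\<lambda>P. (`) f ` P) ` {P. partition_on A P} \<subseteq> {P. partition_on B P}"
      using part_img[of A _ f] assms by (auto simp: bij_betw_def)
    show "(\<lambda>P. (`) g ` P) ` {P. partition_on B P} \<subseteq> {P. partition_on A P}"
      using part_img[of B _ g] bg by (auto simp: bij_betw_def)
  qed
qed

lemma Bell_shift: "card {P. partition_on {k+1..n} P} = Bell (n - k)"
proof -
  have "bij_betw (\<lambda>x. x + k) {1..n-k} {k+1..n}"
    by (rule bij_betw_byWitness[where f'="\<lambda>x. x - k"]) (auto simp: image_iff intro!: bexI[where x="_ - k"])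
  from card_part_bij[OF this] show ?thesis unfolding Bell_def by simp
qed

definition splitp :: "nat \<Rightarrow> nat \<Rightarrow> nat set set \<Rightarrow> bool" where
  "splitp k n P \<longleftrightarrow> partition_on {1..n} P \<and> (\<forall>B\<in>P. B \<subseteq> {1..k} \<or> B \<subseteq> {k+1..n})"

lemma card_split:
  assumes "k \<le> n"
  shows "card {P. splitp k n P} = Bell k * Bell (n - k)"
proof -
  let ?A = "{1..k}" and ?B = "{k+1..n}"
  have "bij_betw (\<lambda>(P1, P2). P1 \<union> P2) ({P. partition_on ?A P} \<times> {P. partition_on ?B P}) {P. splitp k n P}"
  proof (rule bij_betw_byWitness[where f'="\<lambda>P. ({X\<in>P. X \<subseteq> ?A}, {X\<in>P. X \<subseteq> ?B})"])
    show "\<forall>a\<in>{P. partition_on ?A P} \<times> {P. partition_on ?B P}.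
       ({X \<in> (case a of (P1, P2) \<Rightarrow> P1 \<union> P2). X \<subseteq> ?A}, {X \<in> (case a of (P1, P2) \<Rightarrow> P1 \<union> P2). X \<subseteq> ?B}) = a"
    proof -
    have key: "{X \<in> P1 \<union> P2. X \<subseteq> ?A} = P1 \<and> {X \<in> P1 \<union> P2. X \<subseteq> ?B} = P2" if p1: "partition_on ?A P1" and p2: "partition_on ?B P2" for P1 P2
    proof -
      have s1: "\<And>X. X \<in> P1 \<Longrightarrow> X \<subseteq> ?A \<and> X \<noteq> {}" using p1 by (auto simp: partition_on_def)
      have s2: "\<And>X. X \<in> P2 \<Longrightarrow> X \<subseteq> ?B \<and> X \<noteq> {}" using p2 by (auto simp: partition_on_def)
      have n2: "\<And>X. X \<in> P2 \<Longrightarrow> \<not> X \<subseteq> ?A"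
      proof
        fix X assume "X \<in> P2" "X \<subseteq> ?A"
        with s2[of X] obtain x where "x \<in> X" "x \<in> ?A" "x \<in> ?B" by blast
        then show False by auto
      qed
      have n1: "\<And>X. X \<in> P1 \<Longrightarrow> \<not> X \<subseteq> ?B"
      proof
        fix X assume "X \<in> P1" "X \<subseteq> ?B"
        with s1[of X] obtain x where "x \<in> X" "x \<in> ?A" "x \<in> ?B" by blast
        then show False by auto
      qed
      have "{X \<in> P1 \<union> P2. X \<subseteq> ?A} = P1" using s1 n2 by blast
      moreover have "{X \<in> P1 \<union> P2. X \<subseteq> ?B} = P2" using s2 n1 by blast
      ultimately show ?thesis by simp
    qed
    show ?thesis using key by auto
    qed
    show "\<forall>b\<in>{P. splitp k n P}. (case ({X \<in> b. X \<subseteq> ?A}, {X \<in> b. X \<subseteq> ?B}) of (P1, P2) \<Rightarrow> P1 \<union> P2) = b"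
      by (auto simp: splitp_def)
    show "(\<lambda>(P1, P2). P1 \<union> P2) ` ({P. partition_on ?A P} \<times> {P. partition_on ?B P}) \<subseteq> {P. splitp k n P}"
    proof clarify
      fix P1 P2 assume p1: "partition_on ?A P1" and p2: "partition_on ?B P2"
      have u: "\<Union>(P1 \<union> P2) = {1..n}" using p1 p2 assms by (auto simp: partition_on_def)
      have d: "disjoint (P1 \<union> P2)"
        by (rule disjoint_union) (use p1 p2 in \<open>auto simp: partition_on_def\<close>)
      show "splitp k n (P1 \<union> P2)" using u d p1 p2 unfolding splitp_def partition_on_def by auto
    qed
    show "(\<lambda>P. ({X \<in> P. X \<subseteq> ?A}, {X \<in> P. X \<subseteq> ?B})) ` {P. splitp k n P}
      \<subseteq> {P. partition_on ?A P} \<times> {P. partition_on ?B P}"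
    proof -
      have key2: "partition_on ?A {X \<in> P. X \<subseteq> ?A} \<and> partition_on ?B {X \<in> P. X \<subseteq> ?B}" if sp: "splitp k n P" for P
      proof -
      from sp have p: "partition_on {1..n} P" and s: "\<forall>B\<in>P. B \<subseteq> ?A \<or> B \<subseteq> ?B" by (auto simp: splitp_def)
      have dj: "disjoint P" and ne: "{} \<notin> P" and un: "\<Union>P = {1..n}" using p by (auto simp: partition_on_def)
      have "\<Union>{X \<in> P. X \<subseteq> ?A} = ?A"
      proof
        show "?A \<subseteq> \<Union>{X \<in> P. X \<subseteq> ?A}"
        proof
          fix x assume x: "x \<in> ?A"
          then have "x \<in> \<Union>P" using un assms by auto
          then obtain X where "X \<in> P" "x \<in> X" by auto
          moreover have "X \<subseteq> ?A \<or> X \<subseteq> ?B" using s \<open>X \<in> P\<close> by blast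
          moreover have "x \<notin> ?B" using x by auto
          ultimately have "X \<subseteq> ?A" by blast
          with \<open>X \<in> P\<close> \<open>x \<in> X\<close> show "x \<in> \<Union>{X \<in> P. X \<subseteq> ?A}" by auto
        qed
      qed auto
      moreover have "\<Union>{X \<in> P. X \<subseteq> ?B} = ?B"
      proof
        show "?B \<subseteq> \<Union>{X \<in> P. X \<subseteq> ?B}"
        proof
          fix x assume x: "x \<in> ?B"
          then have "x \<in> \<Union>P" using un assms by auto
          then obtain X where "X \<in> P" "x \<in> X" by auto
          moreover have "X \<subseteq> ?A \<or> X \<subseteq> ?B" using s \<open>X \<in> P\<close> by blast
          moreover have "x \<notin> ?A" using x by auto
          ultimately have "X \<subseteq> ?B" by blast
          with \<open>X \<in> P\<close> \<open>x \<in> X\<close> show "x \<in> \<Union>{X \<in> P. X \<subseteq> ?B}" by auto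
        qed
      qed auto
      ultimately show ?thesis
        using dj ne unfolding partition_on_def disjoint_def by auto
    qed
    show ?thesis using key2 by auto
    qed
  qed
  then have "card {P. splitp k n P} = card ({P. partition_on ?A P} \<times> {P. partition_on ?B P})"
    by (simp add: bij_betw_same_card)
  also have "\<dots> = Bell k * Bell (n - k)" using Bell_shift[of k n] by (simp add: card_cartesian_product Bell_def)
  finally show ?thesis .
qed


definition col :: "nat \<Rightarrow> nat \<Rightarrow> nat \<Rightarrow> nat" where
  "col k n i = (if i \<in> {1..n} then (if i \<le> k then 2 else 1) else undefined)"

lemma col_inj: "k \<le> n \<Longrightarrow> k' \<le> n \<Longrightarrow> col k n = col k' n \<Longrightarrow> k = k'"
proof (rule ccontr)
  assume a: "k \<le> n" "k' \<le> n" "col k n = col k' n" "k \<noteq> k'"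
  have e: "\<And>x. col k n x = col k' n x" using a(3) by simp
  show False
  proof (cases "k < k'")
    case True
    then have r: "k' \<in> {1..n}" "\<not> k' \<le> k" using a(2) by auto
    have "col k n k' = 1" unfolding col_def using r by simp
    moreover have "col k' n k' = 2" unfolding col_def using r by simp
    ultimately have "(1::nat) = 2" using e[of k'] by metis
    then show False by simp
  next
    case False
    then have r: "k \<in> {1..n}" "\<not> k \<le> k'" using a(1,4) by auto
    have "col k' n k = 1" unfolding col_def using r by simp
    moreover have "col k n k = 2" unfolding col_def using r by simp
    ultimately have "(1::nat) = 2" using e[of k] by metis
    then show False by simp
  qed
qed

lemma col_in: "i \<in> {1..n} \<Longrightarrow> col k n i = (if i \<le> k then 2 else 1)"
  unfolding col_def by simp
lemma col_2: "col k n i = 2 \<Longrightarrow> i \<in> {1..n} \<Longrightarrow> i \<le> k"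
  using col_in[of i n k] by (cases "i \<le> k") auto
lemma col_1: "col k n i = 1 \<Longrightarrow> i \<in> {1..n} \<Longrightarrow> i > k"
  using col_in[of i n k] by (cases "i \<le> k") auto
lemma col_12: "col k n i = 1 \<Longrightarrow> col k n j = 2 \<Longrightarrow> i \<in> {1..n} \<Longrightarrow> j \<in> {1..n} \<Longrightarrow> i < j \<Longrightarrow> False"
  using col_1[of k n i] col_2[of k n j] by simp

lemma good_char:
  "{\<sigma> \<in> colored_partitions n. \<not> contains_11_12 n \<sigma> \<and> \<not> contains_11_22 n \<sigma> \<and> \<not> contains_12_11 n \<sigma>}
   = (\<Union>k\<in>{0..n}. (\<lambda>P. (P, col k n)) ` {P. splitp k n P})" (is "?L = ?R")
proof
  show "?L \<subseteq> ?R"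
  proof
    fix \<sigma> assume m: "\<sigma> \<in> ?L"
    obtain P c where sig: "\<sigma> = (P, c)" by fastforce
    have p: "partition_on {1..n} P" and c: "c \<in> {1..n} \<rightarrow>\<^sub>E {1, 2}"
      using m sig by (auto simp: colored_partitions_def)
    have n1: "\<not> contains_11_12 n (P, c)" and n2: "\<not> contains_11_22 n (P, c)"
      and n3: "\<not> contains_12_11 n (P, c)" using m sig by auto
    define S where "S = {i \<in> {1..n}. c i = 2}"
    define k where "k = (if S = {} then 0 else Max S)"
    have fS: "finite S" unfolding S_def by simp
    have kn: "k \<le> n"
    proof (cases "S = {}")
      case False
      then have "Max S \<in> S" using fS by simp
      then show ?thesis unfolding k_def S_def using False by auto
    qed (simp add: k_def)
    have c12: "\<And>i. i \<in> {1..n} \<Longrightarrow> c i = 1 \<or> c i = 2" using c by auto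
    have ck: "c = col k n"
    proof
      fix i
      show "c i = col k n i"
      proof (cases "i \<in> {1..n}")
        case False
        moreover have "c i = undefined" using c False by (auto simp: PiE_def extensional_def)
        ultimately show ?thesis unfolding col_def by (simp only: if_not_P[OF False] if_False)
      next
        case True
        show ?thesis
        proof (cases "i \<le> k")
          case le: True
          then have ne: "S \<noteq> {}" using True by (auto simp: k_def)
          then have kS: "k \<in> S" using fS by (simp add: k_def)
          then have ck2: "c k = 2" "k \<in> {1..n}" by (auto simp: S_def)
          have "c i = 2"
          proof (rule ccontr)
            assume "c i \<noteq> 2"
            then have ci: "c i = 1" using c12 True by blast
            have "i < k" using le ck2 \<open>c i \<noteq> 2\<close> by (cases "i = k") auto
            show False
            proof (cases "same_block P i k")
              case sb: True
              have "contains_11_12 n (P,c)"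
                unfolding contains_11_12_def fst_conv snd_conv
                using \<open>i < k\<close> ci ck2 True sb by (intro bexI[of _ i] bexI[of _ k]) auto
              then show False using n1 by blast
            next
              case sb: False
              have "contains_11_22 n (P,c)"
                unfolding contains_11_22_def fst_conv snd_conv
                using \<open>i < k\<close> ci ck2 True sb by (intro bexI[of _ i] bexI[of _ k]) auto
              then show False using n2 by blast
            qed
          qed
          then show ?thesis using col_in[OF True, of k] le by simp
        next
          case gt: False
          have "c i \<noteq> 2"
          proof
            assume "c i = 2"
            then have "i \<in> S" using True by (simp add: S_def)
            then have "i \<le> Max S" using fS by simp
            moreover have "S \<noteq> {}" using \<open>i \<in> S\<close> by auto
            ultimately show False using gt by (simp add: k_def)
          qed
          then have "c i = 1" using c12 True by blast
          then show ?thesis using col_in[OF True, of k] gt by simp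
        qed
      qed
    qed
    have sp: "splitp k n P"
      unfolding splitp_def
    proof (intro conjI p ballI)
      fix B assume B: "B \<in> P"
      have Bs: "B \<subseteq> {1..n}" using p B by (auto simp: partition_on_def)
      show "B \<subseteq> {1..k} \<or> B \<subseteq> {k + 1..n}"
      proof (rule ccontr)
        assume "\<not> (B \<subseteq> {1..k} \<or> B \<subseteq> {k + 1..n})"
        then obtain x y where xy: "x \<in> B" "y \<in> B" "x \<notin> {1..k}" "y \<notin> {k+1..n}" by blast
        then have "x > k" "y \<le> k" "x \<in> {1..n}" "y \<in> {1..n}" using Bs by auto
        moreover have "same_block P y x" using B xy by (auto simp: same_block_def)
        ultimately have sb: "y < x" "same_block P y x" "y \<in> {1..n}" "x \<in> {1..n}" by auto
        have "c y = 2" using ck col_in[OF \<open>y \<in> {1..n}\<close>, of k] \<open>y \<le> k\<close> by simp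
        moreover have "c x = 1" using ck col_in[OF \<open>x \<in> {1..n}\<close>, of k] \<open>x > k\<close> by simp
        ultimately have "contains_12_11 n (P,c)" using sb
          unfolding contains_12_11_def fst_conv snd_conv by (intro bexI[of _ y] bexI[of _ x]) auto
        then show False using n3 by blast
      qed
    qed
    have "(P, col k n) \<in> (\<lambda>P. (P, col k n)) ` {P. splitp k n P}" using sp by blast
    then show "\<sigma> \<in> ?R" using sig ck kn by (intro UN_I[of k]) auto
  qed
  show "?R \<subseteq> ?L"
  proof
    fix \<sigma> assume "\<sigma> \<in> ?R"
    then obtain k P where kn: "k \<le> n" and sp: "splitp k n P" and sig: "\<sigma> = (P, col k n)" by auto
    have p: "partition_on {1..n} P" and s: "\<forall>B\<in>P. B \<subseteq> {1..k} \<or> B \<subseteq> {k+1..n}"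
      using sp by (auto simp: splitp_def)
    have "col k n \<in> {1..n} \<rightarrow>\<^sub>E {1, 2}"
      unfolding PiE_iff extensional_def using col_in[of _ n k] by (auto simp: col_def)
    then have "\<sigma> \<in> colored_partitions n" using p sig by (simp add: colored_partitions_def)
    moreover have "\<not> contains_11_12 n \<sigma>"
    proof
      assume "contains_11_12 n \<sigma>"
      then obtain i j where "i \<in> {1..n}" "j \<in> {1..n}" "i < j" "col k n i = 1" "col k n j = 2"
        unfolding sig contains_11_12_def by auto
      then show False using col_12 by metis
    qed
    moreover have "\<not> contains_11_22 n \<sigma>"
    proof
      assume "contains_11_22 n \<sigma>"
      then obtain i j where "i \<in> {1..n}" "j \<in> {1..n}" "i < j" "col k n i = 1" "col k n j = 2"
        unfolding sig contains_11_22_def by auto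
      then show False using col_12 by metis
    qed
    moreover have "\<not> contains_12_11 n \<sigma>"
    proof
      assume "contains_12_11 n \<sigma>"
      then obtain i j B where ij: "i \<in> {1..n}" "j \<in> {1..n}" "i < j" "B \<in> P" "i \<in> B" "j \<in> B"
        "col k n i = 2" "col k n j = 1"
        unfolding sig contains_12_11_def same_block_def by auto
      have ik: "i \<le> k" using col_2[OF ij(7) ij(1)] .
      have jk: "j > k" using col_1[OF ij(8) ij(2)] .
      have "B \<subseteq> {1..k} \<or> B \<subseteq> {k+1..n}" using s ij(4) by blast
      then show False
      proof
        assume "B \<subseteq> {1..k}" then have "j \<le> k" using ij(6) by auto
        then show False using jk by simp
      next
        assume "B \<subseteq> {k+1..n}" then have "i \<ge> k+1" using ij(5) by auto
        then show False using ik by simp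
      qed
    qed
    ultimately show "\<sigma> \<in> ?L" by blast
  qed
qed

theorem mainTheorem16:
  fixes n :: nat
  assumes "n \<ge> 1"
  shows "card {\<sigma> \<in> colored_partitions n. \<not> contains_11_12 n \<sigma> \<and> \<not> contains_11_22 n \<sigma>
                \<and> \<not> contains_12_11 n \<sigma>} = (\<Sum>i = 0..n. Bell i * Bell (n - i))"
proof -
  have fin: "\<And>k. finite {P. splitp k n P}"
    by (rule finite_subset[OF _ finitely_many_partition_on[of "{1..n}"]]) (auto simp: splitp_def)
  have "card (\<Union>k\<in>{0..n}. (\<lambda>P. (P, col k n)) ` {P. splitp k n P})
      = (\<Sum>k = 0..n. card ((\<lambda>P. (P, col k n)) ` {P. splitp k n P}))"
  proof (rule card_UN_disjoint)
    show "\<forall>i\<in>{0..n}. \<forall>j\<in>{0..n}. i \<noteq> j \<longrightarrow>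
      (\<lambda>P. (P, col i n)) ` {P. splitp i n P} \<inter> (\<lambda>P. (P, col j n)) ` {P. splitp j n P} = {}"
    proof (intro ballI impI)
      fix i j assume "i \<in> {0..n}" "j \<in> {0..n}" "i \<noteq> j"
      then have "col i n \<noteq> col j n" using col_inj by auto
      then show "(\<lambda>P. (P, col i n)) ` {P. splitp i n P} \<inter> (\<lambda>P. (P, col j n)) ` {P. splitp j n P} = {}"
        by blast
    qed
  qed (use fin in auto)
  also have "\<dots> = (\<Sum>k = 0..n. Bell k * Bell (n - k))"
  proof (rule sum.cong)
    fix k assume "k \<in> {0..n}"
    then have "card ((\<lambda>P. (P, col k n)) ` {P. splitp k n P}) = card {P. splitp k n P}"
      by (intro card_image) (auto simp: inj_on_def)
    then show "card ((\<lambda>P. (P, col k n)) ` {P. splitp k n P}) = Bell k * Bell (n - k)"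
      using card_split \<open>k \<in> {0..n}\<close> by simp
  qed simp
  finally show ?thesis by (simp add: good_char)
qed

end
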